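(* Let $(\Omega,\mathcal{A},\mu)$ be a complete $\sigma$-finite measure space, let $E$ be a Köthe function space over $(\Omega,\mathcal{A},\mu)$, and let $X$ be a real Banach space such that the simple functions are dense in the Köthe–Bochner space $E(X)$. If $E(X)$ has the Ball Dentable Property ($BDP$), then $X$ has $BDP$.
   Context: For a real Banach space $X$, $B_X$ denotes its closed unit ball and $X^*$ its dual. A slice of a bounded set $C\subseteq X$ is $S(C,x^*,\alpha)=\{x\in C: x^*(x)>\sup x^*(C)-\alpha\}$ with $x^*\in X^*$, $\|x^*\|=1$, $\alpha>0$. $X$ has the Ball Dentable Property ($BDP$) if for every $\varepsilon>0$ there is a slice of $B_X$ of diameter less than $\varepsilon$. A Köthe function space over a complete $\sigma$-finite measure space $(\Omega,\mathcal{A},\mu)$ is a Banach space $(E,\|\cdot\|_E)$ of real-valued measurable functions on $\Omega$ (modulo equality $\mu$-a.e.) such that: (1) $\chi_A\in E$ for all $A\in\mathcal{A}$ with $\mu(A)<\infty$; (2) every $f\in E$ is $\mu$-integrable over every $A\in\mathcal{A}$ with $\mu(A)<\infty$; (3) if $g$ is measurable, $f\in E$ and $|g|\le|f|$ $\mu$-a.e., then $g\in E$ and $\|g\|_E\le\|f\|_E$. A function $f:\Omega\to X$ is simple if $f=\sum_{i=1}^n x_i\chi_{A_i}$ with $A_i\in\mathcal{A}$ pairwise disjoint, $\mu(A_i)<\infty$, and $x_i\in X\setminus\{0\}$; $f$ is Bochner measurable if it is the $\mu$-a.e. pointwise norm limit of a sequence of simple functions. The Köthe–Bochner space is $E(X)=\{f:\Omega\to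 X \text{ Bochner measurable}: \|f(\cdot)\|\in E\}$ with norm $\|f\|_{E(X)}=\big\|\,\|f(\cdot)\|\,\big\|_E$. *)

theory Defs
  imports "HOL-Analysis.Analysis"
begin

section \<open>Ball Dentable Property for a seminormed real vector space\<close>

text \<open>A (semi)normed real vector space is given by a carrier set S inside some type,
  explicit vector operations add and sc (scalar multiplication) and a seminorm p.
  Elements of seminorm zero are identified with 0 (quotient); all notions below are
  invariant under this identification.\<close>

definition is_dual_functional ::
  "('v \<Rightarrow> 'v \<Rightarrow> 'v) \<Rightarrow> (real \<Rightarrow> 'v \<Rightarrow> 'v) \<Rightarrow> 'v set \<Rightarrow> ('v \<Rightarrow> real) \<Rightarrow> ('v \<Rightarrow> real) \<Rightarrow> bool" where
  "is_dual_functional add sc S p \<phi> \<longleftrightarrow>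
     (\<forall>x\<in>S. \<forall>y\<in>S. \<forall>a b. \<phi> (add (sc a x) (sc b y)) = a * \<phi> x + b * \<phi> y) \<and>
     (\<exists>C. \<forall>x\<in>S. \<bar>\<phi> x\<bar> \<le> C * p x)"

definition unit_ball_sn :: "'v set \<Rightarrow> ('v \<Rightarrow> real) \<Rightarrow> 'v set" where
  "unit_ball_sn S p = {x\<in>S. p x \<le> 1}"

definition dual_norm_sn :: "'v set \<Rightarrow> ('v \<Rightarrow> real) \<Rightarrow> ('v \<Rightarrow> real) \<Rightarrow> real" where
  "dual_norm_sn S p \<phi> = Sup ((\<lambda>x. \<bar>\<phi> x\<bar>) ` unit_ball_sn S p)"

definition slice_sn :: "'v set \<Rightarrow> ('v \<Rightarrow> real) \<Rightarrow> real \<Rightarrow> 'v set" where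
  "slice_sn C \<phi> \<alpha> = {x\<in>C. \<phi> x > Sup (\<phi> ` C) - \<alpha>}"

definition diam_sn :: "('v \<Rightarrow> 'v \<Rightarrow> 'v) \<Rightarrow> (real \<Rightarrow> 'v \<Rightarrow> 'v) \<Rightarrow> ('v \<Rightarrow> real) \<Rightarrow> 'v set \<Rightarrow> real" where
  "diam_sn add sc p A = Sup {p (add x (sc (-1) y)) | x y. x \<in> A \<and> y \<in> A}"

definition BDP_sn ::
  "('v \<Rightarrow> 'v \<Rightarrow> 'v) \<Rightarrow> (real \<Rightarrow> 'v \<Rightarrow> 'v) \<Rightarrow> 'v set \<Rightarrow> ('v \<Rightarrow> real) \<Rightarrow> bool" where
  "BDP_sn add sc S p \<longleftrightarrow>
     (\<forall>\<epsilon>>0. \<exists>\<phi> \<alpha>. is_dual_functional add sc S p \<phi> \<and> dual_norm_sn S p \<phi> = 1 \<and> \<alpha> > 0 \<and>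
        diam_sn add sc p (slice_sn (unit_ball_sn S p) \<phi> \<alpha>) < \<epsilon>)"

text \<open>BDP for a real Banach space X (a type of class banach).\<close>
definition BDP :: "'x::real_normed_vector itself \<Rightarrow> bool" where
  "BDP _ \<longleftrightarrow> BDP_sn ((+) :: 'x \<Rightarrow> 'x \<Rightarrow> 'x) (*\<^sub>R) UNIV norm"

section \<open>Koethe function spaces\<close>

text \<open>E is a set of real functions on the measure space M, N its (semi)norm; the Banach
  space is E modulo equality a.e.\<close>
definition kothe_space :: "'a measure \<Rightarrow> ('a \<Rightarrow> real) set \<Rightarrow> (('a \<Rightarrow> real) \<Rightarrow> real) \<Rightarrow> bool" where
  "kothe_space M E N \<longleftrightarrow>
     \<comment> \<open>measurable functions, linear subspace\<close>
     E \<subseteq> borel_measurable M \<and>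
     (\<lambda>_. 0) \<in> E \<and>
     (\<forall>f\<in>E. \<forall>g\<in>E. (\<lambda>x. f x + g x) \<in> E) \<and>
     (\<forall>f\<in>E. \<forall>c. (\<lambda>x. c * f x) \<in> E) \<and>
     \<comment> \<open>N is a norm on E modulo a.e. equality\<close>
     (\<forall>f\<in>E. N f \<ge> 0) \<and>
     (\<forall>f\<in>E. \<forall>g\<in>E. N (\<lambda>x. f x + g x) \<le> N f + N g) \<and>
     (\<forall>f\<in>E. \<forall>c. N (\<lambda>x. c * f x) = \<bar>c\<bar> * N f) \<and>
     (\<forall>f\<in>E. N f = 0 \<longleftrightarrow> (AE x in M. f x = 0)) \<and>
     \<comment> \<open>completeness (Banach space)\<close>
     (\<forall>F. (\<forall>n. F n \<in> E) \<longrightarrow>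
          (\<forall>e>0. \<exists>K. \<forall>m\<ge>K. \<forall>n\<ge>K. N (\<lambda>x. F m x - F n x) < e) \<longrightarrow>
          (\<exists>f\<in>E. (\<lambda>n. N (\<lambda>x. F n x - f x)) \<longlonglongrightarrow> 0)) \<and>
     \<comment> \<open>(1) characteristic functions of sets of finite measure\<close>
     (\<forall>A\<in>sets M. emeasure M A < \<infinity> \<longrightarrow> indicator A \<in> E) \<and>
     \<comment> \<open>(2) local integrability\<close>
     (\<forall>f\<in>E. \<forall>A\<in>sets M. emeasure M A < \<infinity> \<longrightarrow> set_integrable M A f) \<and>
     \<comment> \<open>(3) ideal property / lattice norm\<close>
     (\<forall>f\<in>E. \<forall>g\<in>borel_measurable M. (AE x in M. \<bar>g x\<bar> \<le> \<bar>f x\<bar>) \<longrightarrow> g \<in> E \<and> N g \<le> N f)"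

section \<open>Koethe-Bochner spaces\<close>

definition simple_fun_X :: "'a measure \<Rightarrow> ('a \<Rightarrow> 'x::real_normed_vector) \<Rightarrow> bool" where
  "simple_fun_X M s \<longleftrightarrow>
     (\<exists>n::nat. \<exists>A :: nat \<Rightarrow> 'a set. \<exists>v :: nat \<Rightarrow> 'x.
        (\<forall>i<n. A i \<in> sets M \<and> emeasure M (A i) < \<infinity> \<and> v i \<noteq> 0) \<and>
        disjoint_family_on A {..<n} \<and>
        s = (\<lambda>\<omega>. \<Sum>i<n. indicator (A i) \<omega> *\<^sub>R v i))"

definition bochner_measurable :: "'a measure \<Rightarrow> ('a \<Rightarrow> 'x::real_normed_vector) \<Rightarrow> bool" where
  "bochner_measurable M f \<longleftrightarrow>
     (\<exists>s :: nat \<Rightarrow> 'a \<Rightarrow> 'x. (\<forall>n. simple_fun_X M (s n)) \<and>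
        (AE \<omega> in M. (\<lambda>n. s n \<omega>) \<longlonglongrightarrow> f \<omega>))"

definition kothe_bochner :: "'a measure \<Rightarrow> ('a \<Rightarrow> real) set \<Rightarrow> ('a \<Rightarrow> 'x::real_normed_vector) set" where
  "kothe_bochner M E = {f. bochner_measurable M f \<and> (\<lambda>\<omega>. norm (f \<omega>)) \<in> E}"

definition kb_norm :: "(('a \<Rightarrow> real) \<Rightarrow> real) \<Rightarrow> ('a \<Rightarrow> 'x::real_normed_vector) \<Rightarrow> real" where
  "kb_norm N f = N (\<lambda>\<omega>. norm (f \<omega>))"

definition fun_add :: "('a \<Rightarrow> 'x::real_vector) \<Rightarrow> ('a \<Rightarrow> 'x) \<Rightarrow> 'a \<Rightarrow> 'x" where
  "fun_add f g = (\<lambda>\<omega>. f \<omega> + g \<omega>)"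

definition fun_scale :: "real \<Rightarrow> ('a \<Rightarrow> 'x::real_vector) \<Rightarrow> 'a \<Rightarrow> 'x" where
  "fun_scale c f = (\<lambda>\<omega>. c *\<^sub>R f \<omega>)"

definition BDP_kothe_bochner :: "'a measure \<Rightarrow> ('a \<Rightarrow> real) set \<Rightarrow> (('a \<Rightarrow> real) \<Rightarrow> real) \<Rightarrow> 'x::real_normed_vector itself \<Rightarrow> bool" where
  "BDP_kothe_bochner M E N _ \<longleftrightarrow>
     BDP_sn fun_add fun_scale (kothe_bochner M E :: ('a \<Rightarrow> 'x) set) (kb_norm N)"

definition simple_dense :: "'a measure \<Rightarrow> ('a \<Rightarrow> real) set \<Rightarrow> (('a \<Rightarrow> real) \<Rightarrow> real) \<Rightarrow> 'x::real_normed_vector itself \<Rightarrow> bool" where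
  "simple_dense M E N _ \<longleftrightarrow>
     (\<forall>f \<in> (kothe_bochner M E :: ('a \<Rightarrow> 'x) set). \<forall>e>0. \<exists>s. simple_fun_X M s \<and>
        s \<in> kothe_bochner M E \<and> kb_norm N (\<lambda>\<omega>. f \<omega> - s \<omega>) < e)"

end

theory Submission
  imports Defs
begin



definition sfc :: "'a measure \<Rightarrow> ('a \<Rightarrow> 'x::real_normed_vector) \<Rightarrow> bool" where
"sfc M s \<longleftrightarrow> finite (range s) \<and> (\<forall>x. {\<omega>\<in>space M. s \<omega> = x} \<in> sets M) \<and>
   (\<forall>\<omega>. \<omega> \<notin> space M \<longrightarrow> s \<omega> = 0) \<and> emeasure M {\<omega>\<in>space M. s \<omega> \<noteq> 0} < \<infinity>"

lemma step_eval:
  fixes n :: nat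
  assumes "disjoint_family_on A {..<n}" "j < n" "\<omega> \<in> A j"
  shows "(\<Sum>i<n. indicator (A i) \<omega> *\<^sub>R (v i::'x::real_vector)) = v j"
proof -
  have "(\<Sum>i<n. indicator (A i) \<omega> *\<^sub>R v i) = (\<Sum>i\<in>{j}. indicator (A i) \<omega> *\<^sub>R v i)"
  proof (rule sum.mono_neutral_right)
    show "\<forall>i\<in>{..<n} - {j}. indicator (A i) \<omega> *\<^sub>R v i = 0"
      using assms unfolding disjoint_family_on_def by (auto simp: indicator_def)
  qed (use assms in simp_all)
  then show ?thesis using assms by simp
qed

lemma step_eval0:
  fixes n :: nat
  assumes "\<forall>j<n. \<omega> \<notin> A j"
  shows "(\<Sum>i<n. indicator (A i) \<omega> *\<^sub>R (v i::'x::real_vector)) = 0"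
  using assms by (auto intro!: sum.neutral simp: indicator_def)

lemma step_cases:
  fixes n :: nat
  assumes "disjoint_family_on A {..<n}"
  shows "(\<exists>j<n. \<omega> \<in> A j \<and> (\<Sum>i<n. indicator (A i) \<omega> *\<^sub>R (v i::'x::real_vector)) = v j) \<or>
         ((\<forall>j<n. \<omega> \<notin> A j) \<and> (\<Sum>i<n. indicator (A i) \<omega> *\<^sub>R v i) = 0)"
  using step_eval[OF assms, of _ \<omega> v] step_eval0[of n \<omega> A v] by metis

lemma step_sfc:
  fixes n :: nat
  assumes A: "\<forall>i<n. A i \<in> sets M \<and> emeasure M (A i) < \<infinity>" and d: "disjoint_family_on A {..<n}"
  shows "sfc M (\<lambda>\<omega>. \<Sum>i<n. indicator (A i) \<omega> *\<^sub>R (w i::'x::real_normed_vector))"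
proof -
  define s where "s = (\<lambda>\<omega>. \<Sum>i<n. indicator (A i) \<omega> *\<^sub>R w i)"
  have c: "\<And>\<omega>. (\<exists>j<n. \<omega> \<in> A j \<and> s \<omega> = w j) \<or> ((\<forall>j<n. \<omega> \<notin> A j) \<and> s \<omega> = 0)"
    unfolding s_def using step_cases[OF d] by blast
  have sp: "\<And>j. j < n \<Longrightarrow> A j \<subseteq> space M" using A sets.sets_into_space by blast
  have "range s \<subseteq> insert 0 (w ` {..<n})" using c by blast
  then have fin: "finite (range s)" by (rule finite_subset) auto
  have pre: "{\<omega>\<in>space M. s \<omega> = x} = (\<Union>j\<in>{j. j<n \<and> w j = x}. A j) \<union> (if x = 0 then space M - (\<Union>j<n. A j) else {})" for x
  proof (intro equalityI subsetI)
    fix \<omega> assume "\<omega> \<in> {\<omega>\<in>space M. s \<omega> = x}"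
    then show "\<omega> \<in> (\<Union>j\<in>{j. j<n \<and> w j = x}. A j) \<union> (if x = 0 then space M - (\<Union>j<n. A j) else {})"
      using c[of \<omega>] by auto
  next
    fix \<omega> assume h: "\<omega> \<in> (\<Union>j\<in>{j. j<n \<and> w j = x}. A j) \<union> (if x = 0 then space M - (\<Union>j<n. A j) else {})"
    show "\<omega> \<in> {\<omega>\<in>space M. s \<omega> = x}"
    proof (cases "\<exists>j<n. \<omega> \<in> A j")
      case True
      then obtain j where "j<n" "\<omega> \<in> A j" by blast
      then have "s \<omega> = w j" unfolding s_def using step_eval[OF d] by blast
      moreover have "w j = x"
      proof -
        from h \<open>j<n\<close> \<open>\<omega> \<in> A j\<close> obtain k where "k<n" "w k = x" "\<omega> \<in> A k" by (auto split: if_splits)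
        with d \<open>j<n\<close> \<open>\<omega> \<in> A j\<close> have "k = j" unfolding disjoint_family_on_def by blast
        with \<open>w k = x\<close> show ?thesis by simp
      qed
      ultimately show ?thesis using sp \<open>j<n\<close> \<open>\<omega> \<in> A j\<close> by auto
    next
      case False
      then show ?thesis using h c[of \<omega>] by (auto split: if_splits)
    qed
  qed
  have pres: "{\<omega>\<in>space M. s \<omega> = x} \<in> sets M" for x
    unfolding pre using A by (auto intro!: sets.Un sets.Diff sets.finite_UN)
  have out: "\<omega> \<notin> space M \<Longrightarrow> s \<omega> = 0" for \<omega> using c[of \<omega>] sp by blast
  have sub: "{\<omega>\<in>space M. s \<omega> \<noteq> 0} \<subseteq> (\<Union>j<n. A j)" using c by blast
  have "emeasure M (\<Union>j<n. A j) \<le> (\<Sum>j<n. emeasure M (A j))"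
    using A by (intro emeasure_subadditive_finite) auto
  also have "\<dots> < \<infinity>" using A by (simp add: sum_Pinfty less_top)
  finally have "emeasure M {\<omega>\<in>space M. s \<omega> \<noteq> 0} < \<infinity>"
    using sub A by (meson emeasure_mono le_less_trans sets.finite_UN finite_lessThan lessThan_iff)
  then show ?thesis unfolding s_def[symmetric] sfc_def using fin pres out by blast
qed





lemma simple_sfc:
  assumes "simple_fun_X M s" shows "sfc M s"
  using assms unfolding simple_fun_X_def using step_sfc by blast

lemma sfc_simple:
  fixes s :: "'a \<Rightarrow> 'x::real_normed_vector"
  assumes "sfc M s" shows "simple_fun_X M s"
proof -
  have fin: "finite (range s)" and pre: "\<And>x. {\<omega>\<in>space M. s \<omega> = x} \<in> sets M"
    and out: "\<And>\<omega>. \<omega> \<notin> space M \<Longrightarrow> s \<omega> = 0" and supp: "emeasure M {\<omega>\<in>space M. s \<omega> \<noteq> 0} < \<infinity>"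
    using assms unfolding sfc_def by auto
  define V where "V = range s - {0}"
  have "finite V" using fin unfolding V_def by simp
  then obtain e where e: "bij_betw e {0..<card V} V" using ex_bij_betw_nat_finite by blast
  define n where "n = card V"
  define A where "A = (\<lambda>i. {\<omega>\<in>space M. s \<omega> = e i})"
  have eV: "\<And>i. i < n \<Longrightarrow> e i \<in> V" using e unfolding n_def bij_betw_def by auto
  have einj: "\<And>i j. i < n \<Longrightarrow> j < n \<Longrightarrow> e i = e j \<Longrightarrow> i = j"
    using e unfolding n_def bij_betw_def inj_on_def by auto
  have esurj: "\<And>v. v \<in> V \<Longrightarrow> \<exists>i<n. e i = v"
    using e unfolding n_def bij_betw_def by (metis atLeastLessThan_iff imageE)
  have Asets: "\<forall>i<n. A i \<in> sets M \<and> emeasure M (A i) < \<infinity> \<and> e i \<noteq> 0"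
  proof (intro allI impI conjI)
    fix i assume i: "i < n"
    show "A i \<in> sets M" unfolding A_def by (rule pre)
    have "A i \<subseteq> {\<omega>\<in>space M. s \<omega> \<noteq> 0}" using eV[OF i] unfolding A_def V_def by auto
    then have "emeasure M (A i) \<le> emeasure M {\<omega>\<in>space M. s \<omega> \<noteq> 0}"
      by (intro emeasure_mono) (use pre in \<open>auto simp: A_def\<close>)
    then show "emeasure M (A i) < \<infinity>" using supp by simp
    show "e i \<noteq> 0" using eV[OF i] unfolding V_def by auto
  qed
  have disj: "disjoint_family_on A {..<n}"
    unfolding disjoint_family_on_def A_def using einj by auto
  have eq: "s = (\<lambda>\<omega>. \<Sum>i<n. indicator (A i) \<omega> *\<^sub>R e i)"
  proof
    fix \<omega>
    show "s \<omega> = (\<Sum>i<n. indicator (A i) \<omega> *\<^sub>R e i)"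
    proof (cases "\<omega> \<in> space M \<and> s \<omega> \<noteq> 0")
      case True
      then have "s \<omega> \<in> V" unfolding V_def by auto
      then obtain j where j: "j < n" "e j = s \<omega>" using esurj by blast
      then have "\<omega> \<in> A j" using True unfolding A_def by auto
      then show ?thesis using step_eval[OF disj j(1), of \<omega> e] j by simp
    next
      case False
      then have "s \<omega> = 0" using out by blast
      moreover have "\<forall>j<n. \<omega> \<notin> A j" using False Asets unfolding A_def by auto
      ultimately show ?thesis using step_eval0[of n \<omega> A e] by simp
    qed
  qed
  show ?thesis unfolding simple_fun_X_def
    by (rule exI[of _ n], rule exI[of _ A], rule exI[of _ e]) (use Asets disj eq in blast)
qed

lemma sfc_binop:
  fixes s :: "'a \<Rightarrow> 'x::real_normed_vector" and t :: "'a \<Rightarrow> 'y::real_normed_vector"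
    and op :: "'x \<Rightarrow> 'y \<Rightarrow> 'z::real_normed_vector"
  assumes s: "sfc M s" and t: "sfc M t" and op0: "op 0 0 = 0"
  shows "sfc M (\<lambda>\<omega>. op (s \<omega>) (t \<omega>))"
proof -
  have fs: "finite (range s)" and ps: "\<And>x. {\<omega>\<in>space M. s \<omega> = x} \<in> sets M"
    and os: "\<And>\<omega>. \<omega> \<notin> space M \<Longrightarrow> s \<omega> = 0" and ms: "emeasure M {\<omega>\<in>space M. s \<omega> \<noteq> 0} < \<infinity>"
    using s unfolding sfc_def by auto
  have ft: "finite (range t)" and pt: "\<And>x. {\<omega>\<in>space M. t \<omega> = x} \<in> sets M"
    and ot: "\<And>\<omega>. \<omega> \<notin> space M \<Longrightarrow> t \<omega> = 0" and mt: "emeasure M {\<omega>\<in>space M. t \<omega> \<noteq> 0} < \<infinity>"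
    using t unfolding sfc_def by auto
  have "range (\<lambda>\<omega>. op (s \<omega>) (t \<omega>)) \<subseteq> (\<lambda>(a,b). op a b) ` (range s \<times> range t)" by auto
  then have fin: "finite (range (\<lambda>\<omega>. op (s \<omega>) (t \<omega>)))"
    by (rule finite_subset) (use fs ft in auto)
  have pre: "{\<omega>\<in>space M. op (s \<omega>) (t \<omega>) = x} =
      (\<Union>p\<in>{p\<in>range s \<times> range t. op (fst p) (snd p) = x}. {\<omega>\<in>space M. s \<omega> = fst p} \<inter> {\<omega>\<in>space M. t \<omega> = snd p})" for x
  proof (intro equalityI subsetI)
    fix \<omega> assume "\<omega> \<in> {\<omega>\<in>space M. op (s \<omega>) (t \<omega>) = x}"
    then show "\<omega> \<in> (\<Union>p\<in>{p\<in>range s \<times> range t. op (fst p) (snd p) = x}. {\<omega>\<in>space M. s \<omega> = fst p} \<inter> {\<omega>\<in>space M. t \<omega> = snd p})"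
      by (intro UN_I[of "(s \<omega>, t \<omega>)"]) auto
  qed auto
  have pres: "{\<omega>\<in>space M. op (s \<omega>) (t \<omega>) = x} \<in> sets M" for x
    unfolding pre using fs ft ps pt by (intro sets.finite_UN) auto
  have out: "\<omega> \<notin> space M \<Longrightarrow> op (s \<omega>) (t \<omega>) = 0" for \<omega> using os ot op0 by simp
  have sub: "{\<omega>\<in>space M. op (s \<omega>) (t \<omega>) \<noteq> 0} \<subseteq> {\<omega>\<in>space M. s \<omega> \<noteq> 0} \<union> {\<omega>\<in>space M. t \<omega> \<noteq> 0}"
    using op0 by auto
  have S1: "{\<omega>\<in>space M. s \<omega> \<noteq> 0} \<in> sets M"
  proof -
    have "{\<omega>\<in>space M. s \<omega> \<noteq> 0} = space M - {\<omega>\<in>space M. s \<omega> = 0}" by auto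
    then show ?thesis using ps by simp
  qed
  have S2: "{\<omega>\<in>space M. t \<omega> \<noteq> 0} \<in> sets M"
  proof -
    have "{\<omega>\<in>space M. t \<omega> \<noteq> 0} = space M - {\<omega>\<in>space M. t \<omega> = 0}" by auto
    then show ?thesis using pt by simp
  qed
  have "emeasure M {\<omega>\<in>space M. op (s \<omega>) (t \<omega>) \<noteq> 0} \<le> emeasure M ({\<omega>\<in>space M. s \<omega> \<noteq> 0} \<union> {\<omega>\<in>space M. t \<omega> \<noteq> 0})"
    by (rule emeasure_mono[OF sub]) (use S1 S2 in auto)
  also have "\<dots> \<le> emeasure M {\<omega>\<in>space M. s \<omega> \<noteq> 0} + emeasure M {\<omega>\<in>space M. t \<omega> \<noteq> 0}"
    by (rule emeasure_subadditive) (use S1 S2 in auto)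
  also have "\<dots> < \<infinity>" using ms mt by (simp add: less_top)
  finally show ?thesis unfolding sfc_def using fin pres out by blast
qed

lemma sfc_real_meas:
  fixes s :: "'a \<Rightarrow> 'x::real_normed_vector" and r :: "'x \<Rightarrow> real"
  assumes s: "sfc M s"
  shows "(\<lambda>\<omega>. r (s \<omega>)) \<in> borel_measurable M"
proof (rule borel_measurableI)
  fix S :: "real set" assume "open S"
  have fs: "finite (range s)" and ps: "\<And>x. {\<omega>\<in>space M. s \<omega> = x} \<in> sets M"
    using s unfolding sfc_def by auto
  have "(\<lambda>\<omega>. r (s \<omega>)) -` S \<inter> space M = (\<Union>x\<in>{x\<in>range s. r x \<in> S}. {\<omega>\<in>space M. s \<omega> = x})"
    by auto
  also have "\<dots> \<in> sets M" using fs ps by (intro sets.finite_UN) auto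
  finally show "(\<lambda>\<omega>. r (s \<omega>)) -` S \<inter> space M \<in> sets M" .
qed





lemma ae_lim_meas:
  fixes g :: "nat \<Rightarrow> 'a \<Rightarrow> real"
  assumes cm: "complete_measure M" and gm: "\<And>n. g n \<in> borel_measurable M"
    and lim: "AE \<omega> in M. (\<lambda>n. g n \<omega>) \<longlonglongrightarrow> f \<omega>"
  shows "f \<in> borel_measurable M"
proof -
  define h where "h = (\<lambda>\<omega>. lim (\<lambda>n. g n \<omega>))"
  have hm: "h \<in> borel_measurable M" unfolding h_def by (rule borel_measurable_lim_metric) (rule gm)
  have ae: "AE \<omega> in M. f \<omega> = h \<omega>" using lim
    by eventually_elim (simp add: h_def limI)
  show ?thesis
  proof (rule borel_measurableI)
    fix S :: "real set" assume S: "open S"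
    have "h -` S \<inter> space M \<in> sets M" using hm S by (simp add: measurable_sets)
    moreover have "AE \<omega> in M. \<omega> \<in> h -` S \<inter> space M \<longleftrightarrow> \<omega> \<in> f -` S \<inter> space M"
      using ae AE_space by eventually_elim auto
    ultimately show "f -` S \<inter> space M \<in> sets M"
      using complete_measure.in_sets_AE[OF cm] by blast
  qed
qed

lemma bm_simple: "simple_fun_X M s \<Longrightarrow> bochner_measurable M s"
  unfolding bochner_measurable_def by (rule exI[of _ "\<lambda>n. s"]) simp

lemma bm_lin:
  fixes F G :: "'a \<Rightarrow> 'x::real_normed_vector"
  assumes "bochner_measurable M F" "bochner_measurable M G"
  shows "bochner_measurable M (\<lambda>\<omega>. F \<omega> + c *\<^sub>R G \<omega>)"
proof -
  obtain s where s: "\<And>n. simple_fun_X M (s n)" "AE \<omega> in M. (\<lambda>n. s n \<omega>) \<longlonglongrightarrow> F \<omega>"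
    using assms(1) unfolding bochner_measurable_def by blast
  obtain t where t: "\<And>n. simple_fun_X M (t n)" "AE \<omega> in M. (\<lambda>n. t n \<omega>) \<longlonglongrightarrow> G \<omega>"
    using assms(2) unfolding bochner_measurable_def by blast
  have "simple_fun_X M (\<lambda>\<omega>. s n \<omega> + c *\<^sub>R t n \<omega>)" for n
    using sfc_binop[OF simple_sfc[OF s(1)] simple_sfc[OF t(1)], of "\<lambda>a b. a + c *\<^sub>R b"]
    by (intro sfc_simple) simp
  moreover have "AE \<omega> in M. (\<lambda>n. s n \<omega> + c *\<^sub>R t n \<omega>) \<longlonglongrightarrow> F \<omega> + c *\<^sub>R G \<omega>"
    using s(2) t(2) by eventually_elim (intro tendsto_intros)
  ultimately show ?thesis unfolding bochner_measurable_def
    by (intro exI[of _ "\<lambda>n \<omega>. s n \<omega> + c *\<^sub>R t n \<omega>"]) blast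
qed

lemma bm_norm_meas:
  fixes F G :: "'a \<Rightarrow> 'x::real_normed_vector"
  assumes cm: "complete_measure M" and "bochner_measurable M F" "bochner_measurable M G"
  shows "(\<lambda>\<omega>. norm (F \<omega> + c *\<^sub>R G \<omega>)) \<in> borel_measurable M"
proof -
  obtain s where s: "\<And>n. simple_fun_X M (s n)" "AE \<omega> in M. (\<lambda>n. s n \<omega>) \<longlonglongrightarrow> F \<omega>"
    using assms(2) unfolding bochner_measurable_def by blast
  obtain t where t: "\<And>n. simple_fun_X M (t n)" "AE \<omega> in M. (\<lambda>n. t n \<omega>) \<longlonglongrightarrow> G \<omega>"
    using assms(3) unfolding bochner_measurable_def by blast
  have "(\<lambda>\<omega>. norm (s n \<omega> + c *\<^sub>R t n \<omega>)) \<in> borel_measurable M" for n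
    using sfc_real_meas[OF sfc_binop[OF simple_sfc[OF s(1)] simple_sfc[OF t(1)], of "\<lambda>a b. a + c *\<^sub>R b"], of norm]
    by simp
  moreover have "AE \<omega> in M. (\<lambda>n. norm (s n \<omega> + c *\<^sub>R t n \<omega>)) \<longlonglongrightarrow> norm (F \<omega> + c *\<^sub>R G \<omega>)"
    using s(2) t(2) by eventually_elim (intro tendsto_intros)
  ultimately show ?thesis by (rule ae_lim_meas[OF cm])
qed





locale KBc =
  fixes M :: "'a measure" and E :: "('a \<Rightarrow> real) set" and N :: "('a \<Rightarrow> real) \<Rightarrow> real"
  assumes cm: "complete_measure M" and ks: "kothe_space M E N"
begin

lemmas kk = ks[unfolded kothe_space_def]

lemma E_meas: "f \<in> E \<Longrightarrow> f \<in> borel_measurable M" using kk[THEN conjunct1] by blast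
lemma E_zero: "(\<lambda>_. 0) \<in> E" using kk[THEN conjunct2, THEN conjunct1] by blast
lemma E_add: "f \<in> E \<Longrightarrow> g \<in> E \<Longrightarrow> (\<lambda>x. f x + g x) \<in> E" using kk[THEN conjunct2, THEN conjunct2, THEN conjunct1] by blast
lemma E_scale: "f \<in> E \<Longrightarrow> (\<lambda>x. c * f x) \<in> E" using kk[THEN conjunct2, THEN conjunct2, THEN conjunct2, THEN conjunct1] by blast
lemma N_nonneg: "f \<in> E \<Longrightarrow> N f \<ge> 0" using kk[THEN conjunct2, THEN conjunct2, THEN conjunct2, THEN conjunct2, THEN conjunct1] by blast
lemma N_tri: "f \<in> E \<Longrightarrow> g \<in> E \<Longrightarrow> N (\<lambda>x. f x + g x) \<le> N f + N g" using kk[THEN conjunct2, THEN conjunct2, THEN conjunct2, THEN conjunct2, THEN conjunct2, THEN conjunct1] by blast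
lemma N_hom: "f \<in> E \<Longrightarrow> N (\<lambda>x. c * f x) = \<bar>c\<bar> * N f" using kk[THEN conjunct2, THEN conjunct2, THEN conjunct2, THEN conjunct2, THEN conjunct2, THEN conjunct2, THEN conjunct1] by blast
lemma N_zero: "f \<in> E \<Longrightarrow> N f = 0 \<longleftrightarrow> (AE x in M. f x = 0)" using kk[THEN conjunct2, THEN conjunct2, THEN conjunct2, THEN conjunct2, THEN conjunct2, THEN conjunct2, THEN conjunct2, THEN conjunct1] by blast
lemma E_ind: "A \<in> sets M \<Longrightarrow> emeasure M A < \<infinity> \<Longrightarrow> indicator A \<in> E" using kk[THEN conjunct2, THEN conjunct2, THEN conjunct2, THEN conjunct2, THEN conjunct2, THEN conjunct2, THEN conjunct2, THEN conjunct2, THEN conjunct2, THEN conjunct1] by blast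
lemma ideal: "f \<in> E \<Longrightarrow> g \<in> borel_measurable M \<Longrightarrow> (AE x in M. \<bar>g x\<bar> \<le> \<bar>f x\<bar>) \<Longrightarrow> g \<in> E \<and> N g \<le> N f"
  using kk[THEN conjunct2, THEN conjunct2, THEN conjunct2, THEN conjunct2, THEN conjunct2, THEN conjunct2, THEN conjunct2, THEN conjunct2, THEN conjunct2, THEN conjunct2, THEN conjunct2] by blast

abbreviation KB :: "('a \<Rightarrow> 'x::real_normed_vector) set" where "KB \<equiv> kothe_bochner M E"
abbreviation p :: "('a \<Rightarrow> 'x::real_normed_vector) \<Rightarrow> real" where "p \<equiv> kb_norm N"

lemma KB_D: "F \<in> KB \<Longrightarrow> bochner_measurable M F \<and> (\<lambda>\<omega>. norm (F \<omega>)) \<in> E"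
  unfolding kothe_bochner_def by simp

lemma p_nonneg: "F \<in> KB \<Longrightarrow> p F \<ge> 0" unfolding kb_norm_def using KB_D N_nonneg by blast

lemma KB_zero: "(\<lambda>\<omega>. 0::'x::real_normed_vector) \<in> KB \<and> p (\<lambda>\<omega>. 0::'x) = 0"
proof
  have "simple_fun_X M (\<lambda>\<omega>. 0::'x)" unfolding simple_fun_X_def
    by (rule exI[of _ 0]) (auto simp: disjoint_family_on_def)
  then show "(\<lambda>\<omega>. 0::'x) \<in> KB" unfolding kothe_bochner_def using bm_simple E_zero by auto
  show "p (\<lambda>\<omega>. 0::'x) = 0" unfolding kb_norm_def using N_zero[OF E_zero] by simp
qed

lemma KB_lin:
  fixes F G :: "'a \<Rightarrow> 'x::real_normed_vector"
  assumes F: "F \<in> KB" and G: "G \<in> KB"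
  shows "(\<lambda>\<omega>. F \<omega> + c *\<^sub>R G \<omega>) \<in> KB \<and> p (\<lambda>\<omega>. F \<omega> + c *\<^sub>R G \<omega>) \<le> p F + \<bar>c\<bar> * p G"
proof -
  have bF: "bochner_measurable M F" and nF: "(\<lambda>\<omega>. norm (F \<omega>)) \<in> E" using KB_D[OF F] by auto
  have bG: "bochner_measurable M G" and nG: "(\<lambda>\<omega>. norm (G \<omega>)) \<in> E" using KB_D[OF G] by auto
  have nG': "(\<lambda>x. \<bar>c\<bar> * norm (G x)) \<in> E" using E_scale[OF nG] by simp
  have f': "(\<lambda>x. norm (F x) + \<bar>c\<bar> * norm (G x)) \<in> E" using E_add[OF nF nG'] by simp
  have gm: "(\<lambda>\<omega>. norm (F \<omega> + c *\<^sub>R G \<omega>)) \<in> borel_measurable M"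
    by (rule bm_norm_meas[OF cm bF bG])
  have le: "AE x in M. \<bar>norm (F x + c *\<^sub>R G x)\<bar> \<le> \<bar>norm (F x) + \<bar>c\<bar> * norm (G x)\<bar>"
  proof (rule AE_I2)
    fix x
    have "norm (F x + c *\<^sub>R G x) \<le> norm (F x) + norm (c *\<^sub>R G x)" by (rule norm_triangle_ineq)
    then show "\<bar>norm (F x + c *\<^sub>R G x)\<bar> \<le> \<bar>norm (F x) + \<bar>c\<bar> * norm (G x)\<bar>" by simp
  qed
  from ideal[OF f' gm le] have 1: "(\<lambda>\<omega>. norm (F \<omega> + c *\<^sub>R G \<omega>)) \<in> E"
    and 2: "N (\<lambda>\<omega>. norm (F \<omega> + c *\<^sub>R G \<omega>)) \<le> N (\<lambda>x. norm (F x) + \<bar>c\<bar> * norm (G x))" by auto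
  have "N (\<lambda>x. norm (F x) + \<bar>c\<bar> * norm (G x)) \<le> N (\<lambda>\<omega>. norm (F \<omega>)) + N (\<lambda>x. \<bar>c\<bar> * norm (G x))"
    using N_tri[OF nF nG'] by simp
  also have "N (\<lambda>x. \<bar>c\<bar> * norm (G x)) = \<bar>c\<bar> * N (\<lambda>\<omega>. norm (G \<omega>))" using N_hom[OF nG] by simp
  finally have 3: "N (\<lambda>x. norm (F x) + \<bar>c\<bar> * norm (G x)) \<le> p F + \<bar>c\<bar> * p G" unfolding kb_norm_def .
  show ?thesis unfolding kothe_bochner_def kb_norm_def using 1 2 3 bm_lin[OF bF bG]
    by (auto simp: kb_norm_def)
qed

lemma KB_scale:
  fixes F :: "'a \<Rightarrow> 'x::real_normed_vector"
  assumes F: "F \<in> KB"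
  shows "fun_scale c F \<in> KB \<and> p (fun_scale c F) = \<bar>c\<bar> * p F"
proof -
  have e: "fun_scale c F = (\<lambda>\<omega>. (\<lambda>\<omega>. 0) \<omega> + c *\<^sub>R F \<omega>)" unfolding fun_scale_def by simp
  have "fun_scale c F \<in> KB" unfolding e using KB_lin[OF conjunct1[OF KB_zero] F] by blast
  moreover have "p (fun_scale c F) = \<bar>c\<bar> * p F"
    using N_hom[OF conjunct2[OF KB_D[OF F]], of "\<bar>c\<bar>"] unfolding kb_norm_def fun_scale_def by simp
  ultimately show ?thesis by blast
qed

lemma KB_add:
  fixes F G :: "'a \<Rightarrow> 'x::real_normed_vector"
  assumes F: "F \<in> KB" and G: "G \<in> KB"
  shows "fun_add F G \<in> KB \<and> p (fun_add F G) \<le> p F + p G"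
  using KB_lin[OF F G, of 1] unfolding fun_add_def by simp

lemma KB_diff:
  fixes F G :: "'a \<Rightarrow> 'x::real_normed_vector"
  assumes F: "F \<in> KB" and G: "G \<in> KB"
  shows "fun_add F (fun_scale (-1) G) \<in> KB \<and> p (fun_add F (fun_scale (-1) G)) \<le> p F + p G"
  using KB_lin[OF F G, of "-1"] unfolding fun_add_def fun_scale_def by simp

end




lemma Sup_div:
  fixes S :: "real set"
  assumes d: "d > 0" and ne: "S \<noteq> {}" and bd: "bdd_above S"
  shows "Sup ((\<lambda>t. t / d) ` S) = Sup S / d"
proof -
  have bd2: "bdd_above ((\<lambda>t. t / d) ` S)"
  proof -
    obtain b where "\<forall>t\<in>S. t \<le> b" using bd unfolding bdd_above_def by blast
    then have "\<forall>t\<in>S. t / d \<le> b / d" using d by (simp add: divide_right_mono)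
    then show ?thesis unfolding bdd_above_def by blast
  qed
  have 1: "Sup ((\<lambda>t. t / d) ` S) \<le> Sup S / d"
  proof (rule cSup_least)
    show "(\<lambda>t. t / d) ` S \<noteq> {}" using ne by simp
    fix y assume "y \<in> (\<lambda>t. t / d) ` S"
    then obtain t where t: "t \<in> S" "y = t / d" by blast
    have "t \<le> Sup S" using cSup_upper[OF t(1) bd] .
    then show "y \<le> Sup S / d" using t d by (simp add: divide_right_mono)
  qed
  have "Sup S \<le> d * Sup ((\<lambda>t. t / d) ` S)"
  proof (rule cSup_least[OF ne])
    fix t assume t: "t \<in> S"
    have "t / d \<le> Sup ((\<lambda>t. t / d) ` S)" using cSup_upper[OF _ bd2] t by blast
    then show "t \<le> d * Sup ((\<lambda>t. t / d) ` S)" using d by (simp add: divide_le_eq mult.commute)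
  qed
  then have 2: "Sup S / d \<le> Sup ((\<lambda>t. t / d) ` S)" using d by (simp add: divide_le_eq mult.commute)
  show ?thesis using 1 2 by linarith
qed

lemma dual_lin:
  assumes "is_dual_functional (+) (*\<^sub>R) (UNIV::'x::real_normed_vector set) norm \<psi>"
  shows "\<psi> (a *\<^sub>R x + b *\<^sub>R y) = a * \<psi> x + b * \<psi> y"
  using assms unfolding is_dual_functional_def by blast

lemma dual_scale:
  assumes "is_dual_functional (+) (*\<^sub>R) (UNIV::'x::real_normed_vector set) norm \<psi>"
  shows "\<psi> (a *\<^sub>R x) = a * \<psi> x"
  using dual_lin[OF assms, of a x 0 x] by simp

lemma X_pair:
  fixes \<psi> :: "'x::real_normed_vector \<Rightarrow> real"
  assumes psi: "is_dual_functional (+) (*\<^sub>R) (UNIV::'x set) norm \<psi>"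
    and fail: "\<forall>\<phi> \<alpha>. is_dual_functional (+) (*\<^sub>R) (UNIV::'x set) norm \<phi> \<and> dual_norm_sn UNIV norm \<phi> = 1 \<and> \<alpha> > 0
       \<longrightarrow> diam_sn (+) (*\<^sub>R) norm (slice_sn (unit_ball_sn UNIV norm) \<phi> \<alpha>) \<ge> \<epsilon>0"
    and e0: "\<epsilon>0 > 0" and dl: "\<delta> > 0"
  shows "\<exists>y z. norm y \<le> 1 \<and> norm z \<le> 1 \<and> norm v * norm (y - z) \<ge> min (\<epsilon>0/2) 2 * norm v \<and>
     \<psi> (norm v *\<^sub>R y) \<ge> \<psi> v - \<delta> \<and> \<psi> (norm v *\<^sub>R z) \<ge> \<psi> v - \<delta>"
proof (cases "v = 0")
  case True
  then show ?thesis using dl by (intro exI[of _ 0]) simp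
next
  case vnz: False
  define B where "B = unit_ball_sn (UNIV::'x set) norm"
  have B: "B = {x. norm x \<le> 1}" unfolding B_def unit_ball_sn_def by simp
  obtain C where C: "\<And>x. \<bar>\<psi> x\<bar> \<le> C * norm x" using psi unfolding is_dual_functional_def by blast
  have bndB: "\<And>x. x \<in> B \<Longrightarrow> \<bar>\<psi> x\<bar> \<le> \<bar>C\<bar>"
  proof -
    fix x assume "x \<in> B"
    then have "norm x \<le> 1" unfolding B by simp
    have "C * norm x \<le> \<bar>C\<bar> * norm x" by (simp add: mult_right_mono)
    also have "\<dots> \<le> \<bar>C\<bar>" using \<open>norm x \<le> 1\<close> by (simp add: mult_left_le)
    finally show "\<bar>\<psi> x\<bar> \<le> \<bar>C\<bar>" using C[of x] by linarith
  qed
  have Bne: "B \<noteq> {}" unfolding B by (auto intro!: exI[of _ 0])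
  define u where "u = (1 / norm v) *\<^sub>R v"
  have nu: "norm u = 1" unfolding u_def using vnz by simp
  have uB: "u \<in> B" unfolding B using nu by simp
  have vu: "v = norm v *\<^sub>R u" unfolding u_def using vnz by simp
  have psiv: "\<psi> v = norm v * \<psi> u" using vu dual_scale[OF psi] by metis
  define d where "d = dual_norm_sn (UNIV::'x set) norm \<psi>"
  have d: "d = Sup ((\<lambda>x. \<bar>\<psi> x\<bar>) ` B)" unfolding d_def dual_norm_sn_def B_def by simp
  have bdabs: "bdd_above ((\<lambda>x. \<bar>\<psi> x\<bar>) ` B)" using bndB unfolding bdd_above_def by blast
  have absle: "\<And>x. x \<in> B \<Longrightarrow> \<bar>\<psi> x\<bar> \<le> d" unfolding d using cSup_upper[OF _ bdabs] by blast
  have dge: "d \<ge> 0" using absle[OF uB] by linarith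
  show ?thesis
  proof (cases "d = 0")
    case True
    then have z: "\<And>x. x \<in> B \<Longrightarrow> \<psi> x = 0" using absle by fastforce
    have "\<psi> (norm v *\<^sub>R u) = 0" "\<psi> v = 0"
      using z[OF uB] dual_scale[OF psi] psiv by auto
    moreover have "\<psi> (norm v *\<^sub>R (-u)) = 0"
    proof -
      have "norm v *\<^sub>R (-u) = (- norm v) *\<^sub>R u" by simp
      then show ?thesis using z[OF uB] dual_scale[OF psi, of "- norm v" u] by simp
    qed
    moreover have "norm (u - (-u)) = 2"
    proof -
      have "u - (-u) = (2::real) *\<^sub>R u" by (simp add: scaleR_2)
      then show ?thesis using nu by simp
    qed
    moreover have "min (\<epsilon>0/2) 2 * norm v \<le> norm v * 2" by (simp add: mult.commute mult_left_mono)
    ultimately show ?thesis using dl nu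
      by (intro exI[of _ u] exI[of _ "-u"]) simp
  next
    case False
    then have dpos: "d > 0" using dge by simp
    define \<psi>' where "\<psi>' = (\<lambda>x. \<psi> x / d)"
    have psi': "is_dual_functional (+) (*\<^sub>R) (UNIV::'x set) norm \<psi>'"
      unfolding is_dual_functional_def
    proof (intro conjI ballI allI)
      fix x y a b
      show "\<psi>' (a *\<^sub>R x + b *\<^sub>R y) = a * \<psi>' x + b * \<psi>' y"
        unfolding \<psi>'_def dual_lin[OF psi] by (simp add: add_divide_distrib)
    next
      show "\<exists>C. \<forall>x\<in>UNIV. \<bar>\<psi>' x\<bar> \<le> C * norm x"
        by (rule exI[of _ "C / d"]) (use C dpos in \<open>auto simp: \<psi>'_def divide_right_mono\<close>)
    qed
    have "(\<lambda>x. \<bar>\<psi>' x\<bar>) ` B = (\<lambda>t. t / d) ` ((\<lambda>x. \<bar>\<psi> x\<bar>) ` B)"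
      unfolding \<psi>'_def using dpos by (auto simp: image_image)
    then have "dual_norm_sn (UNIV::'x set) norm \<psi>' = Sup ((\<lambda>t. t / d) ` ((\<lambda>x. \<bar>\<psi> x\<bar>) ` B))"
      unfolding dual_norm_sn_def B_def by simp
    also have "\<dots> = d / d" using Sup_div[OF dpos _ bdabs] Bne d by simp
    finally have dn: "dual_norm_sn (UNIV::'x set) norm \<psi>' = 1" using dpos by simp
    define \<beta> where "\<beta> = \<delta> / norm v / d"
    have bpos: "\<beta> > 0" unfolding \<beta>_def using dl vnz dpos by simp
    define T where "T = slice_sn B \<psi>' \<beta>"
    have diam: "diam_sn (+) (*\<^sub>R) norm T \<ge> \<epsilon>0" using fail psi' dn bpos unfolding T_def B_def by blast
    have bdp: "bdd_above (\<psi>' ` B)"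
    proof -
      have "\<forall>x\<in>B. \<psi>' x \<le> \<bar>C\<bar> / d" using bndB dpos unfolding \<psi>'_def
        by (metis abs_ge_self divide_right_mono less_imp_le order_trans)
      then show ?thesis unfolding bdd_above_def by blast
    qed
    have Tchar: "\<And>x. x \<in> T \<Longrightarrow> x \<in> B \<and> \<psi>' x > Sup (\<psi>' ` B) - \<beta>" unfolding T_def slice_sn_def by blast
    have "Sup (\<psi>' ` B) - \<beta> < Sup (\<psi>' ` B)" using bpos by simp
    then obtain x0 where x0: "x0 \<in> B" "\<psi>' x0 > Sup (\<psi>' ` B) - \<beta>"
      using less_cSup_iff[of "\<psi>' ` B"] Bne bdp by auto
    then have x0T: "x0 \<in> T" unfolding T_def slice_sn_def by blast
    define D where "D = {norm (x + (-1) *\<^sub>R y) | x y. x \<in> T \<and> y \<in> T}"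
    have Dne: "D \<noteq> {}" unfolding D_def using x0T by blast
    have bdD: "bdd_above D"
    proof -
      have "\<forall>t\<in>D. t \<le> 2"
      proof
        fix t assume "t \<in> D"
        then obtain x y where xy: "t = norm (x + (-1) *\<^sub>R y)" "x \<in> T" "y \<in> T" unfolding D_def by blast
        then have "norm x \<le> 1" "norm y \<le> 1" using Tchar B by auto
        moreover have "norm (x + (-1) *\<^sub>R y) \<le> norm x + norm y"
          using norm_triangle_ineq4[of x y] by simp
        ultimately show "t \<le> 2" using xy by linarith
      qed
      then show ?thesis unfolding bdd_above_def by blast
    qed
    have "\<epsilon>0 / 2 < Sup D" using diam e0 unfolding diam_sn_def D_def by simp
    then obtain t where "t \<in> D" "t > \<epsilon>0 / 2" using less_cSup_iff[OF Dne bdD] by blast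
    then obtain y z where yz: "y \<in> T" "z \<in> T" "norm (y - z) > \<epsilon>0 / 2" unfolding D_def by auto
    have ge: "\<And>w. w \<in> T \<Longrightarrow> \<psi> (norm v *\<^sub>R w) \<ge> \<psi> v - \<delta>"
    proof -
      fix w assume w: "w \<in> T"
      have "\<psi>' u \<le> Sup (\<psi>' ` B)" using cSup_upper[OF _ bdp] uB by blast
      then have "\<psi>' w > \<psi>' u - \<beta>" using Tchar[OF w] by linarith
      then have "\<psi> w / d > \<psi> u / d - \<delta> / norm v / d" unfolding \<psi>'_def \<beta>_def .
      then have "(\<psi> u / d - \<delta> / norm v / d) * d < \<psi> w / d * d"
        using dpos by (intro mult_strict_right_mono) auto
      then have "\<psi> w > \<psi> u - \<delta> / norm v" using dpos by (simp add: left_diff_distrib)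
      then have "norm v * \<psi> w \<ge> norm v * (\<psi> u - \<delta> / norm v)"
        using vnz by (intro mult_left_mono) auto
      then have "norm v * \<psi> w \<ge> \<psi> v - \<delta>" using vnz psiv by (simp add: right_diff_distrib)
      then show "\<psi> (norm v *\<^sub>R w) \<ge> \<psi> v - \<delta>" using dual_scale[OF psi] by simp
    qed
    have "norm (y - z) \<ge> min (\<epsilon>0/2) 2" using yz by linarith
    then have "norm v * norm (y - z) \<ge> norm v * min (\<epsilon>0/2) 2" by (intro mult_left_mono) auto
    then show ?thesis using ge yz Tchar B
      by (intro exI[of _ y] exI[of _ z]) (auto simp: mult.commute)
  qed
qed





locale KBphi = KBc +
  fixes \<phi> :: "('a \<Rightarrow> 'x::real_normed_vector) \<Rightarrow> real"
  assumes phi: "is_dual_functional fun_add fun_scale (kothe_bochner M E) (kb_norm N) \<phi>"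
    and dn: "dual_norm_sn (kothe_bochner M E) (kb_norm N) \<phi> = 1"
begin

lemma phi_lin: "F \<in> KB \<Longrightarrow> G \<in> KB \<Longrightarrow> \<phi> (fun_add (fun_scale a F) (fun_scale b G)) = a * \<phi> F + b * \<phi> G"
  using phi unfolding is_dual_functional_def by blast

lemma phi_add: "F \<in> KB \<Longrightarrow> G \<in> KB \<Longrightarrow> \<phi> (fun_add F G) = \<phi> F + \<phi> G"
  using phi_lin[of F G 1 1] by (simp add: fun_scale_def)

lemma phi_scale: "F \<in> KB \<Longrightarrow> \<phi> (fun_scale a F) = a * \<phi> F"
proof -
  assume F: "F \<in> KB"
  have "fun_add (fun_scale a F) (fun_scale 0 F) = fun_scale a F" by (simp add: fun_add_def fun_scale_def)
  then show ?thesis using phi_lin[OF F F, of a 0] by simp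
qed

lemma phi_zero: "\<phi> (\<lambda>\<omega>. 0) = 0"
proof -
  have "fun_scale 0 (\<lambda>\<omega>::'a. 0::'x) = (\<lambda>\<omega>. 0)" by (simp add: fun_scale_def)
  then show ?thesis using phi_scale[OF conjunct1[OF KB_zero], of 0] by simp
qed

lemma phi_bound: "\<exists>C\<ge>0. \<forall>F\<in>KB. \<bar>\<phi> F\<bar> \<le> C * p F"
proof -
  obtain C where C: "\<forall>F\<in>KB. \<bar>\<phi> F\<bar> \<le> C * p F" using phi unfolding is_dual_functional_def by blast
  have "\<forall>F\<in>KB. \<bar>\<phi> F\<bar> \<le> max C 0 * p F"
  proof
    fix F :: "'a \<Rightarrow> 'x" assume F: "F \<in> KB"
    have "C * p F \<le> max C 0 * p F" using p_nonneg[OF F] by (intro mult_right_mono) auto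
    then show "\<bar>\<phi> F\<bar> \<le> max C 0 * p F" using C F by force
  qed
  then show ?thesis by (intro exI[of _ "max C 0"]) auto
qed

definition "BB = unit_ball_sn (kothe_bochner M E) (kb_norm N :: ('a \<Rightarrow> 'x) \<Rightarrow> real)"

lemma BB_iff: "F \<in> BB \<longleftrightarrow> F \<in> KB \<and> p F \<le> 1" unfolding BB_def unit_ball_sn_def by simp

lemma BB_ne: "BB \<noteq> {}" using KB_zero BB_iff by fastforce

lemma bdd_phi: "bdd_above (\<phi> ` BB)" "bdd_above ((\<lambda>F. \<bar>\<phi> F\<bar>) ` BB)"
proof -
  obtain C where C: "C \<ge> 0" "\<forall>F\<in>KB. \<bar>\<phi> F\<bar> \<le> C * p F" using phi_bound by blast
  have b: "\<forall>F\<in>BB. \<bar>\<phi> F\<bar> \<le> C"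
  proof
    fix F assume "F \<in> BB"
    then have "F \<in> KB" "p F \<le> 1" using BB_iff by auto
    then have "C * p F \<le> C" using C(1) by (simp add: mult_left_le)
    then show "\<bar>\<phi> F\<bar> \<le> C" using C(2) \<open>F \<in> KB\<close> by force
  qed
  show "bdd_above (\<phi> ` BB)" unfolding bdd_above_def using b by (metis abs_ge_self imageE order_trans)
  show "bdd_above ((\<lambda>F. \<bar>\<phi> F\<bar>) ` BB)" unfolding bdd_above_def using b by blast
qed

lemma Sabs: "Sup ((\<lambda>F. \<bar>\<phi> F\<bar>) ` BB) = 1" using dn unfolding dual_norm_sn_def BB_def by simp

lemma abs_le1: "F \<in> BB \<Longrightarrow> \<bar>\<phi> F\<bar> \<le> 1"
  using cSup_upper[OF _ bdd_phi(2), of "\<bar>\<phi> F\<bar>"] Sabs by auto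

lemma Sphi_ge1: "Sup (\<phi> ` BB) \<ge> 1"
proof -
  have "Sup ((\<lambda>F. \<bar>\<phi> F\<bar>) ` BB) \<le> Sup (\<phi> ` BB)"
  proof (rule cSup_least)
    show "(\<lambda>F. \<bar>\<phi> F\<bar>) ` BB \<noteq> {}" using BB_ne by simp
    fix t assume "t \<in> (\<lambda>F. \<bar>\<phi> F\<bar>) ` BB"
    then obtain F where F: "F \<in> BB" "t = \<bar>\<phi> F\<bar>" by blast
    have 1: "\<phi> F \<le> Sup (\<phi> ` BB)" using cSup_upper[OF _ bdd_phi(1)] F(1) by blast
    have "fun_scale (-1) F \<in> BB" using KB_scale[of F "-1"] F(1) BB_iff by auto
    then have "\<phi> (fun_scale (-1) F) \<le> Sup (\<phi> ` BB)" using cSup_upper[OF _ bdd_phi(1)] by blast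
    then have 2: "- \<phi> F \<le> Sup (\<phi> ` BB)" using phi_scale[of F "-1"] F(1) BB_iff by simp
    show "t \<le> Sup (\<phi> ` BB)" using 1 2 F(2) by linarith
  qed
  then show ?thesis using Sabs by simp
qed

lemma phi_le_p: "F \<in> KB \<Longrightarrow> \<phi> F \<le> p F"
proof -
  assume F: "F \<in> KB"
  show ?thesis
  proof (cases "p F = 0")
    case True
    obtain C where C: "C \<ge> 0" "\<forall>F\<in>KB. \<bar>\<phi> F\<bar> \<le> C * p F" using phi_bound by blast
    then show ?thesis using F True by force
  next
    case False
    then have pp: "p F > 0" using p_nonneg[OF F] by simp
    have "fun_scale (1 / p F) F \<in> BB" using KB_scale[OF F, of "1 / p F"] pp BB_iff by auto
    then have "\<bar>\<phi> (fun_scale (1 / p F) F)\<bar> \<le> 1" by (rule abs_le1)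
    then have "\<bar>\<phi> F\<bar> / p F \<le> 1" using phi_scale[OF F, of "1 / p F"] pp by simp
    moreover have "\<phi> F / p F \<le> \<bar>\<phi> F\<bar> / p F" using pp by (simp add: divide_right_mono)
    ultimately have "\<phi> F / p F \<le> 1" by linarith
    then show ?thesis using pp by (simp add: divide_le_eq)
  qed
qed

lemma single_KB:
  assumes A: "A \<in> sets M" "emeasure M A < \<infinity>"
  shows "(\<lambda>\<omega>. indicator A \<omega> *\<^sub>R (x::'x)) \<in> KB \<and> p (\<lambda>\<omega>. indicator A \<omega> *\<^sub>R x) = norm x * N (indicator A)"
proof -
  have "sfc M (\<lambda>\<omega>. \<Sum>i<(1::nat). indicator ((\<lambda>_. A) i) \<omega> *\<^sub>R (\<lambda>_. x) i)"
    by (rule step_sfc) (use A in \<open>auto simp: disjoint_family_on_def\<close>)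
  then have "simple_fun_X M (\<lambda>\<omega>. indicator A \<omega> *\<^sub>R x)" using sfc_simple by simp
  then have bm: "bochner_measurable M (\<lambda>\<omega>. indicator A \<omega> *\<^sub>R x)" by (rule bm_simple)
  have e: "(\<lambda>\<omega>. norm (indicator A \<omega> *\<^sub>R x)) = (\<lambda>\<omega>. norm x * indicator A \<omega>)"
    by (auto simp: indicator_def)
  have iE: "indicator A \<in> E" using E_ind[OF A] .
  have "(\<lambda>\<omega>. norm x * indicator A \<omega>) \<in> E" using E_scale[OF iE] by simp
  moreover have "N (\<lambda>\<omega>. norm x * indicator A \<omega>) = norm x * N (indicator A)" using N_hom[OF iE, of "norm x"] by simp
  ultimately show ?thesis using bm e unfolding kothe_bochner_def kb_norm_def by simp
qed

lemma step_sum: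
  fixes m :: nat
  assumes A: "\<forall>i<m. A i \<in> sets M \<and> emeasure M (A i) < \<infinity>"
  shows "(\<lambda>\<omega>. \<Sum>i<m. indicator (A i) \<omega> *\<^sub>R (w i::'x)) \<in> KB \<and>
     \<phi> (\<lambda>\<omega>. \<Sum>i<m. indicator (A i) \<omega> *\<^sub>R w i) = (\<Sum>i<m. \<phi> (\<lambda>\<omega>. indicator (A i) \<omega> *\<^sub>R w i))"
  using A
proof (induction m)
  case 0
  then show ?case using KB_zero[where 'x='x] phi_zero by simp
next
  case (Suc m)
  then have IH: "(\<lambda>\<omega>. \<Sum>i<m. indicator (A i) \<omega> *\<^sub>R w i) \<in> KB"
    "\<phi> (\<lambda>\<omega>. \<Sum>i<m. indicator (A i) \<omega> *\<^sub>R w i) = (\<Sum>i<m. \<phi> (\<lambda>\<omega>. indicator (A i) \<omega> *\<^sub>R w i))" by auto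
  have S: "(\<lambda>\<omega>. indicator (A m) \<omega> *\<^sub>R w m) \<in> KB" using single_KB Suc.prems by blast
  have e: "(\<lambda>\<omega>. \<Sum>i<Suc m. indicator (A i) \<omega> *\<^sub>R w i) =
      fun_add (\<lambda>\<omega>. \<Sum>i<m. indicator (A i) \<omega> *\<^sub>R w i) (\<lambda>\<omega>. indicator (A m) \<omega> *\<^sub>R w m)"
    by (simp add: fun_add_def)
  show ?case unfolding e using KB_add[OF IH(1) S] phi_add[OF IH(1) S] IH(2) by simp
qed

lemma psi_dual:
  assumes A: "A \<in> sets M" "emeasure M A < \<infinity>"
  shows "is_dual_functional (+) (*\<^sub>R) (UNIV::'x set) norm (\<lambda>x. \<phi> (\<lambda>\<omega>. indicator A \<omega> *\<^sub>R x))"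
  unfolding is_dual_functional_def
proof (intro conjI ballI allI)
  fix x y :: 'x and a b :: real
  have e: "(\<lambda>\<omega>. indicator A \<omega> *\<^sub>R (a *\<^sub>R x + b *\<^sub>R y)) =
     fun_add (fun_scale a (\<lambda>\<omega>. indicator A \<omega> *\<^sub>R x)) (fun_scale b (\<lambda>\<omega>. indicator A \<omega> *\<^sub>R y))"
    by (auto simp: fun_add_def fun_scale_def scaleR_add_right mult.commute)
  show "\<phi> (\<lambda>\<omega>. indicator A \<omega> *\<^sub>R (a *\<^sub>R x + b *\<^sub>R y)) =
      a * \<phi> (\<lambda>\<omega>. indicator A \<omega> *\<^sub>R x) + b * \<phi> (\<lambda>\<omega>. indicator A \<omega> *\<^sub>R y)"
    unfolding e using phi_lin single_KB[OF A] by blast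
next
  obtain C where C: "C \<ge> 0" "\<forall>F\<in>KB. \<bar>\<phi> F\<bar> \<le> C * p F" using phi_bound by blast
  show "\<exists>C. \<forall>x\<in>UNIV. \<bar>\<phi> (\<lambda>\<omega>. indicator A \<omega> *\<^sub>R x)\<bar> \<le> C * norm (x::'x)"
  proof (intro exI[of _ "C * N (indicator A)"] ballI)
    fix x :: 'x
    have "\<bar>\<phi> (\<lambda>\<omega>. indicator A \<omega> *\<^sub>R x)\<bar> \<le> C * (norm x * N (indicator A))"
      using C(2) single_KB[OF A, of x] by metis
    then show "\<bar>\<phi> (\<lambda>\<omega>. indicator A \<omega> *\<^sub>R x)\<bar> \<le> C * N (indicator A) * norm x" by (simp add: ac_simps)
  qed
qed

end




context KBphi begin

lemma get_s:
  assumes dense: "simple_dense M E N TYPE('x)" and a: "a > 0"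
  shows "\<exists>s. simple_fun_X M s \<and> s \<in> BB \<and> \<phi> s > Sup (\<phi> ` BB) - a"
proof -
  obtain C where C: "C \<ge> 0" "\<forall>F\<in>KB. \<bar>\<phi> F\<bar> \<le> C * p F" using phi_bound by blast
  have "Sup (\<phi> ` BB) - a / 2 < Sup (\<phi> ` BB)" using a by simp
  then obtain h where h: "h \<in> BB" "\<phi> h > Sup (\<phi> ` BB) - a / 2"
    using less_cSup_iff[of "\<phi> ` BB"] BB_ne bdd_phi(1) by auto
  have hK: "h \<in> KB" and ph: "p h \<le> 1" using h(1) BB_iff by auto
  define t where "t = min (1/2) (a / (2 * (C + 1)))"
  have tpos: "t > 0" unfolding t_def using a C by simp
  have t1: "t \<le> 1/2" unfolding t_def by (rule min.cobounded1)
  have tC: "t * (C + 1) \<le> a / 2"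
  proof -
    have "t \<le> a / (2 * (C + 1))" unfolding t_def by simp
    then have "t * (C + 1) \<le> a / (2 * (C + 1)) * (C + 1)" using C by (intro mult_right_mono) auto
    also have "\<dots> = a / 2" using C(1) by (simp add: field_simps)
    finally show ?thesis .
  qed
  define h' where "h' = fun_scale (1 - t) h"
  have h'K: "h' \<in> KB" and ph': "p h' = (1 - t) * p h" unfolding h'_def using KB_scale[OF hK, of "1 - t"] t1 by auto
  have phih': "\<phi> h' = (1 - t) * \<phi> h" unfolding h'_def using phi_scale[OF hK] .
  obtain s where s: "simple_fun_X M s" "s \<in> KB" "kb_norm N (\<lambda>\<omega>. h' \<omega> - s \<omega>) < t"
    using dense h'K tpos unfolding simple_dense_def by blast
  define dd where "dd = fun_add h' (fun_scale (-1) s)"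
  have ddK: "dd \<in> KB" unfolding dd_def using KB_diff[OF h'K s(2)] by blast
  have "dd = (\<lambda>\<omega>. h' \<omega> - s \<omega>)" unfolding dd_def by (auto simp: fun_add_def fun_scale_def)
  then have pdd: "p dd < t" using s(3) by simp
  have "fun_add h' (fun_scale (-1) dd) = s" unfolding dd_def by (auto simp: fun_add_def fun_scale_def)
  then have "p s \<le> p h' + p dd" using KB_diff[OF h'K ddK] by simp
  also have "\<dots> < (1 - t) * 1 + t" using ph' ph pdd t1 by (intro add_le_less_mono) (auto intro: mult_left_le)
  finally have sB: "s \<in> BB" using BB_iff s(2) by simp
  have "\<phi> s = \<phi> (fun_add h' (fun_scale (-1) dd))" using \<open>fun_add h' (fun_scale (-1) dd) = s\<close> by simp
  also have "\<dots> = \<phi> h' - \<phi> dd" using phi_lin[OF h'K ddK, of 1 "-1"] by (simp add: fun_scale_def)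
  finally have phis: "\<phi> s = \<phi> h' - \<phi> dd" .
  have "\<phi> dd \<le> C * p dd" using C(2) ddK by force
  also have "\<dots> \<le> C * t" using pdd C(1) by (intro mult_left_mono) auto
  finally have pdd2: "\<phi> dd \<le> C * t" .
  have "\<phi> h \<le> 1" using abs_le1[OF h(1)] by simp
  then have "t * \<phi> h \<le> t" using tpos by (simp add: mult_left_le)
  then have "\<phi> s \<ge> \<phi> h - t * (C + 1)" using phis phih' pdd2 by (simp add: algebra_simps)
  then have "\<phi> s > Sup (\<phi> ` BB) - a" using h(2) tC by linarith
  then show ?thesis using s(1) sB by blast
qed

lemma contra:
  assumes dense: "simple_dense M E N TYPE('x)"
    and fail: "\<forall>\<psi> \<beta>. is_dual_functional (+) (*\<^sub>R) (UNIV::'x set) norm \<psi> \<and> dual_norm_sn UNIV norm \<psi> = 1 \<and> \<beta> > 0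
       \<longrightarrow> diam_sn (+) (*\<^sub>R) norm (slice_sn (unit_ball_sn UNIV norm) \<psi> \<beta>) \<ge> \<epsilon>0"
    and e0: "\<epsilon>0 > 0" and a0: "\<alpha> > 0"
    and diam: "diam_sn fun_add fun_scale (kb_norm N) (slice_sn BB \<phi> \<alpha>) < min (\<epsilon>0/2) 2 / 2"
  shows False
proof -
  define c where "c = min (\<epsilon>0/2) 2"
  have cpos: "c > 0" unfolding c_def using e0 by simp
  define \<alpha>' where "\<alpha>' = min \<alpha> (1/2)"
  have a'pos: "\<alpha>' > 0" unfolding \<alpha>'_def using a0 by simp
  obtain s where s: "simple_fun_X M s" "s \<in> BB" "\<phi> s > Sup (\<phi> ` BB) - \<alpha>'"
    using get_s[OF dense a'pos] by blast
  have sK: "s \<in> KB" using s(2) BB_iff by auto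
  have ps: "p s > 1/2" using phi_le_p[OF sK] s(3) Sphi_ge1 unfolding \<alpha>'_def by linarith
  obtain n A v where rep: "\<forall>i<n. A i \<in> sets M \<and> emeasure M (A i) < \<infinity> \<and> v i \<noteq> 0"
    and disj: "disjoint_family_on A {..<(n::nat)}" and seq: "s = (\<lambda>\<omega>. \<Sum>i<n. indicator (A i) \<omega> *\<^sub>R v i)"
    using s(1) unfolding simple_fun_X_def by blast
  have Am: "\<forall>i<n. A i \<in> sets M \<and> emeasure M (A i) < \<infinity>" using rep by blast
  define \<gamma> where "\<gamma> = \<phi> s - (Sup (\<phi> ` BB) - \<alpha>')"
  have gpos: "\<gamma> > 0" unfolding \<gamma>_def using s(3) by simp
  define \<delta> where "\<delta> = \<gamma> / (real n + 1)"
  have dpos: "\<delta> > 0" unfolding \<delta>_def using gpos by simp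
  define \<psi> where "\<psi> = (\<lambda>i x. \<phi> (\<lambda>\<omega>. indicator (A i) \<omega> *\<^sub>R (x::'x)))"
  have ex: "\<forall>i. \<exists>q. i < n \<longrightarrow> (norm (fst q) \<le> 1 \<and> norm (snd q) \<le> 1 \<and> norm (v i) * norm (fst q - snd q) \<ge> c * norm (v i) \<and>
     \<psi> i (norm (v i) *\<^sub>R fst q) \<ge> \<psi> i (v i) - \<delta> \<and> \<psi> i (norm (v i) *\<^sub>R snd q) \<ge> \<psi> i (v i) - \<delta>)"
  proof
    fix i
    show "\<exists>q. i < n \<longrightarrow> (norm (fst q) \<le> 1 \<and> norm (snd q) \<le> 1 \<and> norm (v i) * norm (fst q - snd q) \<ge> c * norm (v i) \<and>
     \<psi> i (norm (v i) *\<^sub>R fst q) \<ge> \<psi> i (v i) - \<delta> \<and> \<psi> i (norm (v i) *\<^sub>R snd q) \<ge> \<psi> i (v i) - \<delta>)"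
    proof (cases "i < n")
      case True
      have pd: "is_dual_functional (+) (*\<^sub>R) (UNIV::'x set) norm (\<psi> i)"
        unfolding \<psi>_def using psi_dual Am True by blast
      obtain y z where "norm y \<le> 1 \<and> norm z \<le> 1 \<and> norm (v i) * norm (y - z) \<ge> c * norm (v i) \<and>
          \<psi> i (norm (v i) *\<^sub>R y) \<ge> \<psi> i (v i) - \<delta> \<and> \<psi> i (norm (v i) *\<^sub>R z) \<ge> \<psi> i (v i) - \<delta>"
        using X_pair[OF pd fail e0 dpos, of "v i"] unfolding c_def by blast
      then show ?thesis by (intro exI[of _ "(y, z)"]) simp
    qed simp
  qed
  obtain Q where Q: "\<forall>i. i < n \<longrightarrow> (norm (fst (Q i)) \<le> 1 \<and> norm (snd (Q i)) \<le> 1 \<and> norm (v i) * norm (fst (Q i) - snd (Q i)) \<ge> c * norm (v i) \<and>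
     \<psi> i (norm (v i) *\<^sub>R fst (Q i)) \<ge> \<psi> i (v i) - \<delta> \<and> \<psi> i (norm (v i) *\<^sub>R snd (Q i)) \<ge> \<psi> i (v i) - \<delta>)"
    using choice[OF ex] by blast
  define Y where "Y = (\<lambda>i. norm (v i) *\<^sub>R fst (Q i))"
  define Z where "Z = (\<lambda>i. norm (v i) *\<^sub>R snd (Q i))"
  define F where "F = (\<lambda>\<omega>. \<Sum>i<n. indicator (A i) \<omega> *\<^sub>R Y i)"
  define G where "G = (\<lambda>\<omega>. \<Sum>i<n. indicator (A i) \<omega> *\<^sub>R Z i)"
  have phis: "\<phi> s = (\<Sum>i<n. \<psi> i (v i))" unfolding seq \<psi>_def using step_sum[OF Am] by blast
  have FK: "F \<in> KB" and phiF: "\<phi> F = (\<Sum>i<n. \<psi> i (Y i))" unfolding F_def \<psi>_def using step_sum[OF Am] by blast+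
  have GK: "G \<in> KB" and phiG: "\<phi> G = (\<Sum>i<n. \<psi> i (Z i))" unfolding G_def \<psi>_def using step_sum[OF Am] by blast+
  \<comment> \<open>pointwise facts\<close>
  have cs: "\<And>\<omega>. (\<exists>j<n. \<omega> \<in> A j \<and> s \<omega> = v j \<and> F \<omega> = Y j \<and> G \<omega> = Z j) \<or> (s \<omega> = 0 \<and> F \<omega> = 0 \<and> G \<omega> = 0)"
  proof -
    fix \<omega>
    show "(\<exists>j<n. \<omega> \<in> A j \<and> s \<omega> = v j \<and> F \<omega> = Y j \<and> G \<omega> = Z j) \<or> (s \<omega> = 0 \<and> F \<omega> = 0 \<and> G \<omega> = 0)"
    proof (cases "\<exists>j<n. \<omega> \<in> A j")
      case True
      then obtain j where j: "j < n" "\<omega> \<in> A j" by blast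
      show ?thesis using step_eval[OF disj j, of v] step_eval[OF disj j, of Y] step_eval[OF disj j, of Z] j
        unfolding seq F_def G_def by blast
    next
      case False
      then show ?thesis using step_eval0[of n \<omega> A v] step_eval0[of n \<omega> A Y] step_eval0[of n \<omega> A Z]
        unfolding seq F_def G_def by blast
    qed
  qed
  have nF: "\<And>\<omega>. norm (F \<omega>) \<le> norm (s \<omega>)" and nG: "\<And>\<omega>. norm (G \<omega>) \<le> norm (s \<omega>)"
  proof -
    fix \<omega>
    have "\<And>j. j < n \<Longrightarrow> norm (Y j) \<le> norm (v j) \<and> norm (Z j) \<le> norm (v j)"
    proof -
      fix j assume j: "j < n"
      have "norm (v j) * norm (fst (Q j)) \<le> norm (v j) * 1" "norm (v j) * norm (snd (Q j)) \<le> norm (v j) * 1"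
        using Q j by (intro mult_left_mono; simp)+
      then show "norm (Y j) \<le> norm (v j) \<and> norm (Z j) \<le> norm (v j)" unfolding Y_def Z_def by simp
    qed
    then show "norm (F \<omega>) \<le> norm (s \<omega>)" "norm (G \<omega>) \<le> norm (s \<omega>)" using cs[of \<omega>] by auto
  qed
  have nsE: "(\<lambda>\<omega>. norm (s \<omega>)) \<in> E" using KB_D[OF sK] by blast
  have pF: "p F \<le> p s"
    using ideal[OF nsE E_meas[OF conjunct2[OF KB_D[OF FK]]]] nF unfolding kb_norm_def by auto
  have pG: "p G \<le> p s"
    using ideal[OF nsE E_meas[OF conjunct2[OF KB_D[OF GK]]]] nG unfolding kb_norm_def by auto
  have ps1: "p s \<le> 1" using s(2) BB_iff by auto
  have sumY: "\<phi> F \<ge> \<phi> s - real n * \<delta>"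
  proof -
    have "(\<Sum>i<n. \<psi> i (v i) - \<delta>) \<le> (\<Sum>i<n. \<psi> i (Y i))"
      using Q unfolding Y_def by (intro sum_mono) auto
    then show ?thesis using phis phiF by (simp add: sum_subtractf)
  qed
  have sumZ: "\<phi> G \<ge> \<phi> s - real n * \<delta>"
  proof -
    have "(\<Sum>i<n. \<psi> i (v i) - \<delta>) \<le> (\<Sum>i<n. \<psi> i (Z i))"
      using Q unfolding Z_def by (intro sum_mono) auto
    then show ?thesis using phis phiG by (simp add: sum_subtractf)
  qed
  have nd: "real n * \<delta> < \<gamma>"
  proof -
    have "real n * \<delta> = \<gamma> * (real n / (real n + 1))" unfolding \<delta>_def by simp
    also have "\<dots> < \<gamma> * 1" using gpos by (intro mult_strict_left_mono) auto
    finally show ?thesis by simp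
  qed
  have "\<alpha>' \<le> \<alpha>" unfolding \<alpha>'_def by simp
  then have FS: "F \<in> slice_sn BB \<phi> \<alpha>" and GS: "G \<in> slice_sn BB \<phi> \<alpha>"
    unfolding slice_sn_def using sumY sumZ nd FK GK pF pG ps1 BB_iff unfolding \<gamma>_def by auto
  define DD where "DD = fun_add F (fun_scale (-1) G)"
  have DDK: "DD \<in> KB" unfolding DD_def using KB_diff[OF FK GK] by blast
  \<comment> \<open>upper bound via diameter\<close>
  define Dset where "Dset = {kb_norm N (fun_add x (fun_scale (-1) y)) | x y. x \<in> slice_sn BB \<phi> \<alpha> \<and> y \<in> slice_sn BB \<phi> \<alpha>}"
  have bdD: "bdd_above Dset"
  proof -
    have "\<forall>t\<in>Dset. t \<le> 2"
    proof
      fix t assume "t \<in> Dset"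
      then obtain x y where xy: "t = p (fun_add x (fun_scale (-1) y))" "x \<in> BB" "y \<in> BB"
        unfolding Dset_def slice_sn_def by blast
      then have "x \<in> KB" "y \<in> KB" "p x \<le> 1" "p y \<le> 1" using BB_iff by auto
      then show "t \<le> 2" using KB_diff[of x y] xy(1) by force
    qed
    then show ?thesis unfolding bdd_above_def by blast
  qed
  have "p DD \<in> Dset" unfolding Dset_def DD_def using FS GS by blast
  then have "p DD \<le> Sup Dset" using cSup_upper[OF _ bdD] by blast
  also have "Sup Dset < c / 2" using diam unfolding diam_sn_def Dset_def c_def by simp
  finally have up: "p DD < c / 2" .
  \<comment> \<open>lower bound\<close>
  have nDD: "\<And>\<omega>. c * norm (s \<omega>) \<le> norm (DD \<omega>)"
  proof -
    fix \<omega>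
    have DDw: "DD \<omega> = F \<omega> - G \<omega>" unfolding DD_def by (simp add: fun_add_def fun_scale_def)
    show "c * norm (s \<omega>) \<le> norm (DD \<omega>)"
    proof (cases "\<exists>j<n. \<omega> \<in> A j \<and> s \<omega> = v j \<and> F \<omega> = Y j \<and> G \<omega> = Z j")
      case True
      then obtain j where j: "j < n" "s \<omega> = v j" "F \<omega> = Y j" "G \<omega> = Z j" by blast
      have "Y j - Z j = norm (v j) *\<^sub>R (fst (Q j) - snd (Q j))" unfolding Y_def Z_def by (simp add: scaleR_diff_right)
      then have "norm (Y j - Z j) = norm (v j) * norm (fst (Q j) - snd (Q j))" by simp
      then show ?thesis using Q j DDw by (simp add: mult.commute)
    next
      case False
      then have "s \<omega> = 0" "F \<omega> = 0" "G \<omega> = 0" using cs[of \<omega>] by blast+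
      then show ?thesis using DDw by simp
    qed
  qed
  have DDE: "(\<lambda>\<omega>. norm (DD \<omega>)) \<in> E" using KB_D[OF DDK] by blast
  have gm: "(\<lambda>\<omega>. c * norm (s \<omega>)) \<in> borel_measurable M" using E_meas[OF nsE] by measurable
  have "N (\<lambda>\<omega>. c * norm (s \<omega>)) \<le> N (\<lambda>\<omega>. norm (DD \<omega>))"
    using ideal[OF DDE gm] nDD cpos by (auto intro!: AE_I2)
  moreover have "N (\<lambda>\<omega>. c * norm (s \<omega>)) = c * p s" using N_hom[OF nsE, of c] cpos unfolding kb_norm_def by simp
  ultimately have "c * p s \<le> p DD" unfolding kb_norm_def by simp
  moreover have "c * p s > c * (1/2)" using ps cpos by (intro mult_strict_left_mono) auto
  ultimately show False using up by simp
qed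

end


theorem mainTheorem5:
  fixes M :: "'a measure" and E :: "('a \<Rightarrow> real) set" and N :: "('a \<Rightarrow> real) \<Rightarrow> real"
  assumes "complete_measure M" and "sigma_finite_measure M"
    and "kothe_space M E N"
    and "simple_dense M E N TYPE('x::banach)"
    and "BDP_kothe_bochner M E N TYPE('x)"
  shows "BDP TYPE('x)"
proof (rule ccontr)
  assume nb: "\<not> BDP TYPE('x)"
  then have "\<exists>\<epsilon>>0. \<forall>\<phi> \<alpha>. \<not> (is_dual_functional (+) (*\<^sub>R) (UNIV::'x set) norm \<phi> \<and> dual_norm_sn UNIV norm \<phi> = 1 \<and> \<alpha> > 0 \<and>
        diam_sn (+) (*\<^sub>R) norm (slice_sn (unit_ball_sn UNIV norm) \<phi> \<alpha>) < \<epsilon>)"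
    unfolding BDP_def BDP_sn_def by blast
  then obtain \<epsilon>0 where e0: "\<epsilon>0 > 0" and fail0: "\<forall>\<phi> \<alpha>. \<not> (is_dual_functional (+) (*\<^sub>R) (UNIV::'x set) norm \<phi> \<and> dual_norm_sn UNIV norm \<phi> = 1 \<and> \<alpha> > 0 \<and>
        diam_sn (+) (*\<^sub>R) norm (slice_sn (unit_ball_sn UNIV norm) \<phi> \<alpha>) < \<epsilon>0)" by blast
  have fail: "\<forall>\<psi> \<beta>. is_dual_functional (+) (*\<^sub>R) (UNIV::'x set) norm \<psi> \<and> dual_norm_sn UNIV norm \<psi> = 1 \<and> \<beta> > 0
       \<longrightarrow> diam_sn (+) (*\<^sub>R) norm (slice_sn (unit_ball_sn UNIV norm) \<psi> \<beta>) \<ge> \<epsilon>0"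
    using fail0 by (meson not_less)
  have epos: "min (\<epsilon>0/2) 2 / 2 > 0" using e0 by simp
  obtain \<phi> :: "('a \<Rightarrow> 'x) \<Rightarrow> real" and \<alpha> where
    phi: "is_dual_functional fun_add fun_scale (kothe_bochner M E :: ('a \<Rightarrow> 'x) set) (kb_norm N) \<phi>"
    and dn: "dual_norm_sn (kothe_bochner M E :: ('a \<Rightarrow> 'x) set) (kb_norm N) \<phi> = 1" and a0: "\<alpha> > 0"
    and diam: "diam_sn fun_add fun_scale (kb_norm N) (slice_sn (unit_ball_sn (kothe_bochner M E :: ('a \<Rightarrow> 'x) set) (kb_norm N)) \<phi> \<alpha>) < min (\<epsilon>0/2) 2 / 2"
    using assms(5) epos unfolding BDP_kothe_bochner_def BDP_sn_def by blast
  interpret KP: KBphi M E N \<phi>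
    by (rule KBphi.intro[OF KBc.intro[OF assms(1) assms(3)] KBphi_axioms.intro[OF phi dn]])
  show False using KP.contra[OF assms(4) fail e0 a0] diam unfolding KP.BB_def by blast
qed

end
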